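(* Let $\psi=\mathcal{X}_{[0,1/2)}-\mathcal{X}_{[1/2,1)}$ be the Haar wavelet, and let $\{a_I:I\in\mathcal{D}\}$ be independent random variables with $\sum_I\mathscr{E}|a_I|<\infty$ and $a_I\in\mathscr{G}(\nu)$ for all $I$, for some $\nu>0$. For $x\neq y$ in $\mathbb{R}^+$ let $K(x,y;\cdot)=\sum_{I\in\mathcal{D}}a_I\psi_I(x)\psi_I(y)\in L^2(\Omega,d\mathscr{P})$. Then there is a constant $B$ such that for all $x,y,x',y'\in\mathbb{R}^+$ with $x\ne y$: (a) $\|K(x,y;\cdot)\|_{L^2(\Omega,d\mathscr{P})}\leq \dfrac{B}{\delta(x,y)}$; (b.i) $\|K(x',y;\cdot)-K(x,y;\cdot)\|_{L^2(\Omega,d\mathscr{P})}\leq B\dfrac{\delta(x',x)}{\delta(x,y)^2}$ whenever $2\delta(x',x)\leq\delta(x,y)$; (b.ii) $\|K(x,y';\cdot)-K(x,y;\cdot)\|_{L^2(\Omega,d\mathscr{P})}\leq B\dfrac{\delta(y',y)}{\delta(x,y)^2}$ whenever $2\delta(y',y)\leq\delta(x,y)$.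
   Context: $\mathcal{D}=\bigcup_{j\in\mathbb{Z}}\{[k2^{-j},(k+1)2^{-j}):k\in\mathbb{Z}\}$ is the family of dyadic intervals of $\mathbb{R}$, and $\mathcal{D}^+$ the dyadic intervals contained in $\mathbb{R}^+=[0,\infty)$; for $I=[k2^{-j},(k+1)2^{-j})$, $\psi_I(x)=2^{j/2}\psi(2^jx-k)$. The dyadic distance on $\mathbb{R}^+$ is $\delta(x,y)=\inf\{|I|: x,y\in I,\ I\in\mathcal{D}^+\}$ (with $|I|$ the length of $I$). For an integrable random variable $X$, $\eta_{X-\mathscr{E}X}(\lambda)=\log \mathscr{E}e^{\lambda(X-\mathscr{E}X)}$, and $X\in\mathscr{G}(\nu)$ means $X$ is integrable and $\eta_{X-\mathscr{E}X}(\lambda)\leq \lambda^2\nu/2$ for all $\lambda\in\mathbb{R}$. *)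

theory Defs
  imports "HOL-Probability.Probability"
begin

definition dyadic_interval :: "int \<times> int \<Rightarrow> real set" where
  "dyadic_interval I = {real_of_int (snd I) * 2 powr (- real_of_int (fst I)) ..<
                        (real_of_int (snd I) + 1) * 2 powr (- real_of_int (fst I))}"

definition dyadic_len :: "int \<times> int \<Rightarrow> real" where
  "dyadic_len I = 2 powr (- real_of_int (fst I))"

definition haar :: "real \<Rightarrow> real" where
  "haar t = indicator {0..<1/2} t - indicator {1/2..<1} t"

definition haar_I :: "int \<times> int \<Rightarrow> real \<Rightarrow> real" where
  "haar_I I x = 2 powr (real_of_int (fst I) / 2) *
                haar (2 powr (real_of_int (fst I)) * x - real_of_int (snd I))"

definition dyadic_dist :: "real \<Rightarrow> real \<Rightarrow> real" where
  "dyadic_dist x y = Inf {dyadic_len I | I. snd I \<ge> 0 \<and> x \<in> dyadic_interval I \<and> y \<in> dyadic_interval I}"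

definition eta_centered :: "'a measure \<Rightarrow> ('a \<Rightarrow> real) \<Rightarrow> real \<Rightarrow> real" where
  "eta_centered M X l = ln (integral\<^sup>L M (\<lambda>\<omega>. exp (l * (X \<omega> - integral\<^sup>L M X))))"

text \<open>X \<in> G(nu); the moment generating function is required to be finite.\<close>
definition subgaussian :: "'a measure \<Rightarrow> real \<Rightarrow> ('a \<Rightarrow> real) \<Rightarrow> bool" where
  "subgaussian M \<nu> X \<longleftrightarrow> integrable M X \<and>
     (\<forall>l. integrable M (\<lambda>\<omega>. exp (l * (X \<omega> - integral\<^sup>L M X))) \<and>
          eta_centered M X l \<le> l\<^sup>2 * \<nu> / 2)"

definition kernelK :: "(int \<times> int \<Rightarrow> 'a \<Rightarrow> real) \<Rightarrow> real \<Rightarrow> real \<Rightarrow> 'a \<Rightarrow> real" where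
  "kernelK a x y \<omega> = (\<Sum>\<^sub>\<infinity>I. a I \<omega> * haar_I I x * haar_I I y)"

definition L2norm :: "'a measure \<Rightarrow> ('a \<Rightarrow> real) \<Rightarrow> real" where
  "L2norm M f = sqrt (integral\<^sup>L M (\<lambda>\<omega>. (f \<omega>)\<^sup>2))"

end

theory Submission
  imports Defs
begin


definition Fl :: "real \<Rightarrow> int \<Rightarrow> int" where
  "Fl z j = \<lfloor>2 powr (real_of_int j) * z\<rfloor>"

lemma scaled_iff: fixes P z :: real assumes "P > 0"
  shows "(k * inverse P \<le> z \<and> z < (k+1) * inverse P) \<longleftrightarrow> (k \<le> P*z \<and> P*z < k+1)"
  using assms by (simp add: field_simps)

lemma mem_dyadic: "z \<in> dyadic_interval (j,k) \<longleftrightarrow> Fl z j = k"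
proof -
  have q: "2 powr (real_of_int j) > 0" by simp
  have "z \<in> dyadic_interval (j,k) \<longleftrightarrow> (real_of_int k * inverse (2 powr (real_of_int j)) \<le> z \<and> z < (real_of_int k+1) * inverse (2 powr (real_of_int j)))"
    unfolding dyadic_interval_def by (simp add: powr_minus)
  also have "\<dots> \<longleftrightarrow> Fl z j = k" unfolding scaled_iff[OF q] Fl_def floor_eq_iff ..
  finally show ?thesis .
qed

lemma Fl_div:
  assumes "i \<le> j" shows "Fl z i = Fl z j div 2^(nat (j-i))"
proof -
  have e: "2 powr (real_of_int j) = 2 powr (real_of_int i) * 2^(nat (j-i))"
  proof -
    have "2 powr (real_of_int j) = 2 powr (real_of_int i + real (nat (j-i)))" using assms by simp
    also have "\<dots> = 2 powr (real_of_int i) * 2^(nat (j-i))" by (simp add: powr_add powr_realpow)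
    finally show ?thesis .
  qed
  have "2 powr (real_of_int i) * z = (2 powr (real_of_int j) * z) / real_of_int (2^(nat (j-i)))"
    by (simp add: e)
  moreover have "\<lfloor>(2 powr (real_of_int j) * z) / real_of_int (2^(nat (j-i)))\<rfloor> = \<lfloor>2 powr (real_of_int j) * z\<rfloor> div 2^(nat (j-i))"
    by (rule floor_divide_real_eq_div) simp
  ultimately show ?thesis unfolding Fl_def by simp
qed

lemma Fl_down: "Fl x j = Fl y j \<Longrightarrow> i \<le> j \<Longrightarrow> Fl x i = Fl y i"
  by (simp add: Fl_div)

lemma Fl_succ: "Fl z j = Fl z (j+1) div 2"
  using Fl_div[of j "j+1" z] by simp

lemma haar_I_eq:
  "haar_I (j,k) z = 2 powr (real_of_int j / 2) *
     (if Fl z (j+1) = 2*k then 1 else if Fl z (j+1) = 2*k+1 then -1 else 0)"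
proof -
  have e: "2 powr (real_of_int (j+1)) * z = 2 * (2 powr (real_of_int j) * z)"
    by (simp add: powr_add)
  define t where "t = 2 powr (real_of_int j) * z"
  have "haar (t - real_of_int k) = (if \<lfloor>2*t\<rfloor> = 2*k then 1 else if \<lfloor>2*t\<rfloor> = 2*k+1 then -1 else 0)"
    unfolding haar_def floor_eq_iff by (auto simp: indicator_def)
  then show ?thesis unfolding haar_I_def Fl_def e by (simp add: t_def)
qed

lemma haar_I_nz: "haar_I (j,k) z \<noteq> 0 \<Longrightarrow> Fl z j = k"
  unfolding haar_I_eq using Fl_succ[of z j] by (auto split: if_splits)

lemma haar_I_abs: "\<bar>haar_I (j,k) z\<bar> \<le> 2 powr (real_of_int j / 2)"
  unfolding haar_I_eq by auto

lemma Fl_nonneg: "0 \<le> z \<Longrightarrow> 0 \<le> Fl z j"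
  unfolding Fl_def by simp

lemma common_low: assumes "0 \<le> x" "0 \<le> y" shows "\<exists>j. Fl x j = 0 \<and> Fl y j = 0"
proof -
  obtain n where n: "max x y < 2^n" using real_arch_pow[of 2 "max x y"] by auto
  have pn: "2 powr (real_of_int (- int n)) = inverse (2^n)" by (simp add: powr_minus powr_realpow)
  have "x * inverse (2^n) < 1" "y * inverse (2^n) < 1" using n by (auto simp: field_simps)
  then have "Fl x (- int n) = 0" "Fl y (- int n) = 0"
    using assms unfolding Fl_def floor_eq_iff pn by (auto simp: mult.commute)
  then show ?thesis by blast
qed

lemma Fl_eq_bound: assumes "Fl x j = Fl y j" shows "2 powr (real_of_int j) * \<bar>x - y\<bar> < 1"
proof -
  have "\<bar>2 powr (real_of_int j) * x - 2 powr (real_of_int j) * y\<bar> < 1"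
    using assms unfolding Fl_def
    by (smt (verit) floor_less_iff le_floor_iff of_int_floor_le real_of_int_floor_add_one_gt)
  then show ?thesis by (simp add: right_diff_distrib[symmetric] abs_mult)
qed

lemma ex_J: assumes "0 \<le> x" "0 \<le> y" "x \<noteq> y"
  shows "\<exists>J. \<forall>j. Fl x j = Fl y j \<longleftrightarrow> j \<le> J"
proof -
  define X where "X = {j. Fl x j = Fl y j}"
  obtain j1 where "Fl x j1 = 0" "Fl y j1 = 0" using common_low[OF assms(1,2)] by blast
  then have j1: "j1 \<in> X" unfolding X_def by simp
  obtain n where n: "1 / \<bar>x - y\<bar> < 2^n" using real_arch_pow[of 2 "1 / \<bar>x - y\<bar>"] by auto
  have ub: "j < int n" if "j \<in> X" for j
  proof (rule ccontr)
    assume "\<not> j < int n"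
    then have "2^n \<le> 2 powr (real_of_int j)"
      by (metis le_less not_less of_int_of_nat_eq of_int_le_iff powr_le_cancel_iff powr_realpow zero_less_numeral one_less_numeral_iff semiring_norm(76))
    moreover have "2 powr (real_of_int j) * \<bar>x - y\<bar> < 1" using that Fl_eq_bound X_def by auto
    ultimately show False using n assms(3)
      by (smt (verit, best) divide_less_eq mult_right_mono zero_less_abs_iff)
  qed
  define Y where "Y = X \<inter> {j1..int n}"
  have fY: "finite Y" "j1 \<in> Y" unfolding Y_def using j1 ub[OF j1] by auto
  define J where "J = Max Y"
  have "\<forall>j. j \<in> X \<longleftrightarrow> j \<le> J"
  proof
    fix j show "j \<in> X \<longleftrightarrow> j \<le> J"
    proof
      assume "j \<in> X"
      show "j \<le> J"
      proof (cases "j1 \<le> j")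
        case True
        then have "j \<in> Y" unfolding Y_def using \<open>j \<in> X\<close> ub[OF \<open>j \<in> X\<close>] by simp
        then show ?thesis unfolding J_def by (rule Max_ge[OF fY(1)])
      next
        case False
        have "j1 \<le> J" unfolding J_def by (rule Max_ge[OF fY(1) fY(2)])
        then show ?thesis using False by simp
      qed
    next
      assume "j \<le> J"
      have "Y \<noteq> {}" using fY(2) by blast
      then have "J \<in> Y" unfolding J_def by (rule Max_in[OF fY(1)])
      then have "Fl x J = Fl y J" unfolding Y_def X_def by simp
      then have "Fl x j = Fl y j" using Fl_down \<open>j \<le> J\<close> by blast
      then show "j \<in> X" unfolding X_def by simp
    qed
  qed
  then show ?thesis unfolding X_def by auto
qed

lemma dd_sym: "dyadic_dist x y = dyadic_dist y x"
proof -
  have "{dyadic_len I | I. snd I \<ge> 0 \<and> x \<in> dyadic_interval I \<and> y \<in> dyadic_interval I}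
      = {dyadic_len I | I. snd I \<ge> 0 \<and> y \<in> dyadic_interval I \<and> x \<in> dyadic_interval I}" by blast
  then show ?thesis unfolding dyadic_dist_def by simp
qed

lemma dd_set: assumes "0 \<le> x"
  shows "{dyadic_len I | I. snd I \<ge> 0 \<and> x \<in> dyadic_interval I \<and> y \<in> dyadic_interval I}
     = {2 powr (- real_of_int j) | j. Fl x j = Fl y j}"
proof safe
  fix I :: "int \<times> int" assume "0 \<le> snd I" "x \<in> dyadic_interval I" "y \<in> dyadic_interval I"
  then show "\<exists>j. dyadic_len I = 2 powr - real_of_int j \<and> Fl x j = Fl y j"
    by (cases I) (auto simp: mem_dyadic dyadic_len_def)
next
  fix j assume "Fl x j = Fl y j"
  then show "\<exists>I. 2 powr - real_of_int j = dyadic_len I \<and> 0 \<le> snd I \<and> x \<in> dyadic_interval I \<and> y \<in> dyadic_interval I"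
    using Fl_nonneg[OF assms, of j]
    by (intro exI[of _ "(j, Fl x j)"]) (auto simp: mem_dyadic dyadic_len_def)
qed

lemma dd_nonneg: assumes "0 \<le> x" "0 \<le> y" shows "0 \<le> dyadic_dist x y"
proof -
  obtain j where "Fl x j = 0" "Fl y j = 0" using common_low[OF assms] by blast
  then have "Fl x j = Fl y j" by simp
  then have ne: "{2 powr (- real_of_int j) | j. Fl x j = Fl y j} \<noteq> {}" by blast
  show ?thesis unfolding dyadic_dist_def dd_set[OF assms(1)]
    by (rule cInf_greatest[OF ne]) auto
qed

lemma dd_J: assumes "0 \<le> x" "\<And>j. Fl x j = Fl y j \<longleftrightarrow> j \<le> J"
  shows "dyadic_dist x y = 2 powr (- real_of_int J)"
  unfolding dyadic_dist_def dd_set[OF assms(1)]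
proof (rule cInf_eq_minimum)
  show "2 powr - real_of_int J \<in> {2 powr - real_of_int j |j. Fl x j = Fl y j}" using assms(2) by auto
next
  fix z assume "z \<in> {2 powr - real_of_int j |j. Fl x j = Fl y j}"
  then obtain j where "z = 2 powr - real_of_int j" "j \<le> J" using assms(2) by auto
  then show "2 powr - real_of_int J \<le> z" by simp
qed

lemma terms_eq:
  assumes "0 \<le> x" "0 \<le> y" "0 \<le> x'" "x \<noteq> y" "2 * dyadic_dist x' x \<le> dyadic_dist x y"
  shows "haar_I I x' * haar_I I y = haar_I I x * haar_I I y"
proof (cases "x' = x")
  case True then show ?thesis by simp
next
  case False
  obtain J where J: "\<And>j. Fl x j = Fl y j \<longleftrightarrow> j \<le> J" using ex_J[OF assms(1,2,4)] by blast
  obtain m where m: "\<And>j. Fl x' j = Fl x j \<longleftrightarrow> j \<le> m" using ex_J[OF assms(3,1) False] by blast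
  have "2 * 2 powr (- real_of_int m) \<le> 2 powr (- real_of_int J)"
    using assms(5) dd_J[OF assms(1) J] dd_J[OF assms(3) m] by simp
  then have "2 powr (1 - real_of_int m) \<le> 2 powr (- real_of_int J)"
    by (simp add: powr_diff powr_minus divide_inverse)
  then have Jm: "J + 1 \<le> m" by simp
  obtain j k where I: "I = (j,k)" by (cases I)
  show ?thesis
  proof (cases "haar_I (j,k) y = 0")
    case True then show ?thesis using I by simp
  next
    case False
    then have ky: "Fl y j = k" by (rule haar_I_nz)
    show ?thesis
    proof (cases "j \<le> J")
      case True
      then have "Fl x' (j+1) = Fl x (j+1)" using m Jm by simp
      then have "haar_I (j,k) x' = haar_I (j,k) x" unfolding haar_I_eq by simp
      then show ?thesis using I by simp
    next
      case False
      then have "Fl x j \<noteq> k" using J ky by auto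
      then have hx: "haar_I (j,k) x = 0" using haar_I_nz by blast
      have "Fl x' j \<noteq> k"
      proof
        assume "Fl x' j = k"
        define j' where "j' = min j m"
        have "Fl x' j' = Fl y j'" using Fl_down[of x' j y j'] \<open>Fl x' j = k\<close> ky j'_def by simp
        moreover have "Fl x' j' = Fl x j'" using m j'_def by simp
        ultimately have "Fl x j' = Fl y j'" by simp
        then have "j' \<le> J" using J by blast
        then show False using False Jm j'_def by simp
      qed
      then have "haar_I (j,k) x' = 0" using haar_I_nz by blast
      then show ?thesis using hx I by simp
    qed
  qed
qed

lemma kernel_eq:
  assumes "0 \<le> x" "0 \<le> y" "0 \<le> x'" "x \<noteq> y" "2 * dyadic_dist x' x \<le> dyadic_dist x y"
  shows "kernelK a x' y = kernelK a x y"
proof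
  fix \<omega>
  have "\<And>I. a I \<omega> * haar_I I x' * haar_I I y = a I \<omega> * haar_I I x * haar_I I y"
    using terms_eq[OF assms] by (metis mult.assoc)
  then have e: "(\<lambda>I. a I \<omega> * haar_I I x' * haar_I I y) = (\<lambda>I. a I \<omega> * haar_I I x * haar_I I y)" by (rule ext)
  show "kernelK a x' y \<omega> = kernelK a x y \<omega>" unfolding kernelK_def by (subst e) (rule refl)
qed

lemma kernel_sym: "kernelK a x y = kernelK a y x"
  unfolding kernelK_def by (simp add: mult.commute mult.left_commute)



lemma meas_infsum_nat:
  fixes f :: "nat \<Rightarrow> 'a \<Rightarrow> real"
  assumes [measurable]: "\<And>n. f n \<in> borel_measurable M"
  shows "(\<lambda>\<omega>. infsum (\<lambda>n. f n \<omega>) UNIV) \<in> borel_measurable M"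
proof -
  have eq: "infsum (\<lambda>n. f n \<omega>) UNIV = (if (\<exists>B::nat. \<forall>N. (\<Sum>i<N. \<bar>f i \<omega>\<bar>) \<le> real B) then lim (\<lambda>N. \<Sum>i<N. f i \<omega>) else 0)" for \<omega>
  proof (cases "summable (\<lambda>n. \<bar>f n \<omega>\<bar>)")
    case True
    have "((\<lambda>n. f n \<omega>) has_sum suminf (\<lambda>n. f n \<omega>)) UNIV"
      using True by (intro norm_summable_imp_has_sum) (auto intro: summable_sums summable_rabs_cancel)
    then have i: "infsum (\<lambda>n. f n \<omega>) UNIV = suminf (\<lambda>n. f n \<omega>)" by (rule infsumI)
    have "\<exists>B::nat. \<forall>N. (\<Sum>i<N. \<bar>f i \<omega>\<bar>) \<le> real B"
    proof (intro exI allI)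
      fix N
      have "(\<Sum>i<N. \<bar>f i \<omega>\<bar>) \<le> suminf (\<lambda>n. \<bar>f n \<omega>\<bar>)" using True by (intro sum_le_suminf) auto
      also have "\<dots> \<le> real (nat \<lceil>suminf (\<lambda>n. \<bar>f n \<omega>\<bar>)\<rceil>)" by linarith
      finally show "(\<Sum>i<N. \<bar>f i \<omega>\<bar>) \<le> real (nat \<lceil>suminf (\<lambda>n. \<bar>f n \<omega>\<bar>)\<rceil>)" .
    qed
    then show ?thesis using i by (simp add: suminf_eq_lim)
  next
    case False
    have n1: "\<not> (\<exists>B::nat. \<forall>N. (\<Sum>i<N. \<bar>f i \<omega>\<bar>) \<le> real B)"
      using False summableI_nonneg_bounded[of "\<lambda>n. \<bar>f n \<omega>\<bar>"] by auto
    have "\<not> (\<lambda>n. f n \<omega>) summable_on UNIV"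
      using False summable_on_iff_abs_summable_on_real[of "\<lambda>n. f n \<omega>" UNIV] summable_on_UNIV_nonneg_real_iff[of "\<lambda>n. \<bar>f n \<omega>\<bar>"]
      by simp
    then show ?thesis unfolding if_not_P[OF n1] by (rule infsum_not_exists)
  qed
  show ?thesis unfolding eq by measurable
qed

lemma cs_bound:
  fixes f b v :: "nat \<Rightarrow> real" and V :: real
  assumes fb: "\<And>n. \<bar>f n\<bar> \<le> v n * \<bar>b n\<bar>" and v0: "\<And>n. 0 \<le> v n" and vV: "\<And>N. (\<Sum>n<N. v n) \<le> V"
  shows "ennreal ((infsum f UNIV)^2) \<le> ennreal V * (\<Sum>n. ennreal (v n * (b n)^2))"
proof (cases "summable (\<lambda>n. \<bar>f n\<bar>)")
  case False
  then have "\<not> f summable_on UNIV"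
    using summable_on_iff_abs_summable_on_real[of f UNIV] summable_on_UNIV_nonneg_real_iff[of "\<lambda>n. \<bar>f n\<bar>"] by simp
  then show ?thesis by (simp add: infsum_not_exists)
next
  case True
  have V0: "0 \<le> V" using vV[of 0] by simp
  have sm: "summable f" using True by (rule summable_rabs_cancel)
  have "(f has_sum suminf f) UNIV"
    using True by (intro norm_summable_imp_has_sum) (auto intro: summable_sums sm)
  then have inf: "infsum f UNIV = suminf f" by (rule infsumI)
  define H where "H = (\<Sum>n. ennreal (v n * (b n)^2))"
  have lim: "(\<lambda>N. ennreal ((\<Sum>n<N. f n)^2)) \<longlonglongrightarrow> ennreal ((suminf f)^2)"
    by (intro tendsto_ennrealI tendsto_power summable_LIMSEQ sm)
  have bnd: "ennreal ((\<Sum>n<N. f n)^2) \<le> ennreal V * H" for N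
  proof -
    have a1: "\<bar>\<Sum>n<N. f n\<bar> \<le> (\<Sum>n<N. v n * \<bar>b n\<bar>)"
      by (rule order.trans[OF sum_abs sum_mono[OF fb]])
    have "(\<Sum>n<N. f n)^2 = \<bar>\<Sum>n<N. f n\<bar>^2" by simp
    also have "\<dots> \<le> (\<Sum>n<N. v n * \<bar>b n\<bar>)^2" by (rule power_mono[OF a1]) simp
    also have "(\<Sum>n<N. v n * \<bar>b n\<bar>) = (\<Sum>n<N. sqrt (v n) * (sqrt (v n) * \<bar>b n\<bar>))"
      by (rule sum.cong) (auto simp: v0 mult.assoc[symmetric])
    also have "(\<dots>)^2 \<le> (\<Sum>n<N. (sqrt (v n))^2) * (\<Sum>n<N. (sqrt (v n) * \<bar>b n\<bar>)^2)"
      by (rule Cauchy_Schwarz_ineq_sum)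
    also have "\<dots> = (\<Sum>n<N. v n) * (\<Sum>n<N. v n * (b n)^2)"
      by (simp add: v0 power_mult_distrib)
    also have "\<dots> \<le> V * (\<Sum>n<N. v n * (b n)^2)"
      by (rule mult_right_mono[OF vV]) (simp add: v0 sum_nonneg)
    finally have r: "(\<Sum>n<N. f n)^2 \<le> V * (\<Sum>n<N. v n * (b n)^2)" .
    have "ennreal ((\<Sum>n<N. f n)^2) \<le> ennreal (V * (\<Sum>n<N. v n * (b n)^2))"
      using r by (rule ennreal_leI)
    also have "\<dots> = ennreal V * ennreal (\<Sum>n<N. v n * (b n)^2)"
      by (rule ennreal_mult) (simp_all add: V0 v0 sum_nonneg)
    also have "ennreal (\<Sum>n<N. v n * (b n)^2) = (\<Sum>n<N. ennreal (v n * (b n)^2))"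
      by (rule sum_ennreal[symmetric]) (simp add: v0)
    also have "(\<Sum>n<N. ennreal (v n * (b n)^2)) \<le> H"
      unfolding H_def by (rule sum_le_suminf) auto
    finally show ?thesis by (simp add: mult_left_mono)
  qed
  have "ennreal ((suminf f)^2) \<le> ennreal V * H"
    by (rule LIMSEQ_le_const2[OF lim]) (use bnd in blast)
  then show ?thesis unfolding inf H_def .
qed

lemma sq_le_exp: "(y::real)^2 \<le> 4 * (exp y + exp (-y))"
proof -
  have a: "1 + \<bar>y\<bar>/2 \<le> exp (\<bar>y\<bar>/2)" by (rule exp_ge_add_one_self)
  have "(\<bar>y\<bar>/2)^2 \<le> (1 + \<bar>y\<bar>/2)^2" by (rule power_mono) auto
  also have "\<dots> \<le> (exp (\<bar>y\<bar>/2))^2" by (rule power_mono[OF a]) auto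
  also have "\<dots> = exp \<bar>y\<bar>" by (simp add: exp_double[symmetric] power2_eq_square exp_add[symmetric])
  also have "\<dots> \<le> exp y + exp (-y)" by (cases "0 \<le> y") (auto simp: add_increasing2 add_increasing)
  finally show ?thesis by (simp add: power_divide)
qed

lemma ln_le_imp: "ln (z::real) \<le> c \<Longrightarrow> z \<le> exp c"
proof (cases "z > 0")
  case True
  assume h: "ln z \<le> c"
  have "z = exp (ln z)" using True by simp
  also have "\<dots> \<le> exp c" using h by simp
  finally show ?thesis .
next
  case False
  then show ?thesis using exp_gt_zero[of c] by linarith
qed

lemma second_moment:
  assumes "prob_space M" "subgaussian M \<nu> X"
  shows "(\<integral>\<^sup>+\<omega>. ennreal ((X \<omega>)^2) \<partial>M) \<le> ennreal (16 * exp (\<nu>/2) + 2 * (integral\<^sup>L M X)^2)"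
proof -
  interpret prob_space M by fact
  define m where "m = integral\<^sup>L M X"
  have iX: "integrable M X" using assms(2) unfolding subgaussian_def by blast
  have i1: "integrable M (\<lambda>\<omega>. exp (1 * (X \<omega> - m)))" and e1: "eta_centered M X 1 \<le> 1^2 * \<nu> / 2"
    using assms(2) unfolding subgaussian_def m_def by blast+
  have i2: "integrable M (\<lambda>\<omega>. exp ((-1) * (X \<omega> - m)))" and e2: "eta_centered M X (-1) \<le> (-1)^2 * \<nu> / 2"
    using assms(2) unfolding subgaussian_def m_def by blast+
  have b1: "integral\<^sup>L M (\<lambda>\<omega>. exp (1 * (X \<omega> - m))) \<le> exp (\<nu>/2)"
    using e1 unfolding eta_centered_def m_def by (intro ln_le_imp) simp
  have b2: "integral\<^sup>L M (\<lambda>\<omega>. exp ((-1) * (X \<omega> - m))) \<le> exp (\<nu>/2)"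
    using e2 unfolding eta_centered_def m_def by (intro ln_le_imp) simp
  define R where "R \<omega> = 8 * (exp (1 * (X \<omega> - m)) + exp ((-1) * (X \<omega> - m))) + 2 * m^2" for \<omega>
  have iR: "integrable M R" unfolding R_def using i1 i2 by auto
  have pw: "(X \<omega>)^2 \<le> R \<omega>" for \<omega>
  proof -
    have "(X \<omega>)^2 = ((X \<omega> - m) + m)^2" by simp
    also have "\<dots> \<le> 2 * (X \<omega> - m)^2 + 2 * m^2"
      using power2_sum[of "X \<omega> - m" m] power2_diff[of "X \<omega> - m" m] zero_le_power2[of "X \<omega> - m - m"] by linarith
    also have "\<dots> \<le> R \<omega>" unfolding R_def using sq_le_exp[of "X \<omega> - m"] by simp
    finally show ?thesis .
  qed
  have R0: "0 \<le> R \<omega>" for \<omega> unfolding R_def by (intro add_nonneg_nonneg) auto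
  have "(\<integral>\<^sup>+\<omega>. ennreal ((X \<omega>)^2) \<partial>M) \<le> (\<integral>\<^sup>+\<omega>. ennreal (R \<omega>) \<partial>M)"
    by (intro nn_integral_mono ennreal_leI pw)
  also have "\<dots> = ennreal (integral\<^sup>L M R)" by (rule nn_integral_eq_integral[OF iR]) (simp add: R0)
  also have "integral\<^sup>L M R = 8 * (integral\<^sup>L M (\<lambda>\<omega>. exp (1 * (X \<omega> - m))) + integral\<^sup>L M (\<lambda>\<omega>. exp ((-1) * (X \<omega> - m)))) + 2 * m^2"
    unfolding R_def using i1 i2 by (simp add: prob_space)
  also have "\<dots> \<le> 16 * exp (\<nu>/2) + 2 * m^2" using b1 b2 by simp
  finally show ?thesis unfolding m_def by (simp add: ennreal_leI)
qed

lemma geom_half: "(\<Sum>n. (1/2::real)^n) = 2" "summable (\<lambda>n. (1/2::real)^n)"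
  by (simp_all add: suminf_geometric summable_geometric)

lemma kernel_a:
  assumes "prob_space M" and meas: "\<And>I. a I \<in> borel_measurable M"
    and mom: "\<And>I. (\<integral>\<^sup>+\<omega>. ennreal ((a I \<omega>)^2) \<partial>M) \<le> ennreal A2" and A20: "0 \<le> A2"
    and xy: "0 \<le> x" "0 \<le> y" "x \<noteq> y"
  shows "integrable M (\<lambda>\<omega>. (kernelK a x y \<omega>)^2) \<and> L2norm M (kernelK a x y) \<le> 2 * sqrt A2 / dyadic_dist x y"
proof -
  note meas[measurable]
  obtain J where J: "\<And>j. Fl x j = Fl y j \<longleftrightarrow> j \<le> J" using ex_J[OF xy] by blast
  have dd: "dyadic_dist x y = 2 powr (- real_of_int J)" by (rule dd_J[OF xy(1) J])
  define g where "g n = (J - int n, Fl x (J - int n))" for n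
  define c where "c I = haar_I I x * haar_I I y" for I
  define w where "w n = c (g n)" for n
  define v where "v n = 2 powr (real_of_int J) * (1/2)^n" for n
  define V where "V = 2 powr (real_of_int J) * 2"
  have v0: "0 \<le> v n" for n unfolding v_def by simp
  have V0: "0 \<le> V" unfolding V_def by simp
  have injg: "inj g"
  proof (rule injI)
    fix m n assume "g m = g n"
    then have "J - int m = J - int n" unfolding g_def by simp
    then show "m = n" by simp
  qed
  have supp: "I \<in> range g" if "c I \<noteq> 0" for I
  proof -
    obtain j k where I: "I = (j,k)" by (cases I)
    have "haar_I (j,k) x \<noteq> 0" "haar_I (j,k) y \<noteq> 0" using that I c_def by auto
    then have fx: "Fl x j = k" and fy: "Fl y j = k" using haar_I_nz by blast+
    then have "Fl x j = Fl y j" by simp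
    then have "j \<le> J" using J by blast
    then have "J - int (nat (J - j)) = j" by simp
    then have "g (nat (J - j)) = I" unfolding g_def I using fx by simp
    then show ?thesis by (metis rangeI)
  qed
  have wv: "\<bar>w n\<bar> \<le> v n" for n
  proof -
    define j where "j = J - int n"
    have "\<bar>w n\<bar> = \<bar>haar_I (j, Fl x j) x\<bar> * \<bar>haar_I (j, Fl x j) y\<bar>"
      unfolding w_def c_def g_def j_def by (simp add: abs_mult)
    also have "\<dots> \<le> 2 powr (real_of_int j / 2) * 2 powr (real_of_int j / 2)"
      by (intro mult_mono haar_I_abs) auto
    also have "\<dots> = 2 powr (real_of_int j / 2 + real_of_int j / 2)" by (rule powr_add[symmetric])
    also have "\<dots> = 2 powr (real_of_int j)" by simp
    also have "\<dots> = 2 powr (real_of_int J - real n)" unfolding j_def by simp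
    also have "\<dots> = 2 powr (real_of_int J) / 2 powr (real n)" by (rule powr_diff)
    also have "\<dots> = 2 powr (real_of_int J) / 2 ^ n" by (simp only: powr_realpow)
    also have "\<dots> = v n" unfolding v_def by (simp add: power_one_over)
    finally show ?thesis .
  qed
  have Keq: "kernelK a x y \<omega> = infsum (\<lambda>n. a (g n) \<omega> * w n) UNIV" for \<omega>
  proof -
    have "kernelK a x y \<omega> = infsum (\<lambda>I. a I \<omega> * c I) UNIV"
      unfolding kernelK_def c_def by (simp add: mult.assoc)
    also have "\<dots> = infsum (\<lambda>I. a I \<omega> * c I) (range g)"
      by (rule infsum_cong_neutral) (use supp in auto)
    also have "\<dots> = infsum ((\<lambda>I. a I \<omega> * c I) \<circ> g) UNIV"
      by (rule infsum_reindex) (use injg in auto)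
    finally show ?thesis unfolding w_def by (simp add: comp_def)
  qed
  have Kmeas: "kernelK a x y \<in> borel_measurable M"
  proof -
    have "(\<lambda>\<omega>. infsum (\<lambda>n. a (g n) \<omega> * w n) UNIV) \<in> borel_measurable M"
      by (rule meas_infsum_nat) measurable
    moreover have "kernelK a x y = (\<lambda>\<omega>. infsum (\<lambda>n. a (g n) \<omega> * w n) UNIV)"
      by (rule ext) (rule Keq)
    ultimately show ?thesis by simp
  qed
  define H where "H \<omega> = (\<Sum>n. ennreal (v n * (a (g n) \<omega>)^2))" for \<omega>
  have sumv: "(\<Sum>n<N. v n) \<le> V" for N
  proof -
    have "(\<Sum>n<N. v n) = 2 powr (real_of_int J) * (\<Sum>n<N. (1/2::real)^n)"
      unfolding v_def by (simp add: sum_distrib_left)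
    also have "(\<Sum>n<N. (1/2::real)^n) \<le> 2"
      using sum_le_suminf[OF geom_half(2), of "{..<N}"] geom_half(1) by simp
    finally show ?thesis unfolding V_def by simp
  qed
  have pw: "ennreal ((kernelK a x y \<omega>)^2) \<le> ennreal V * H \<omega>" for \<omega>
    unfolding Keq H_def
  proof (rule cs_bound)
    fix n show "\<bar>a (g n) \<omega> * w n\<bar> \<le> v n * \<bar>a (g n) \<omega>\<bar>"
      using wv[of n] by (simp add: abs_mult mult.commute mult_right_mono)
  qed (auto simp: v0 sumv)
  have Hmeas: "H \<in> borel_measurable M" unfolding H_def by measurable
  have "(\<integral>\<^sup>+\<omega>. H \<omega> \<partial>M) = (\<Sum>n. (\<integral>\<^sup>+\<omega>. ennreal (v n * (a (g n) \<omega>)^2) \<partial>M))"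
    unfolding H_def by (rule nn_integral_suminf) measurable
  also have "\<dots> \<le> (\<Sum>n. ennreal (v n) * ennreal A2)"
  proof (rule suminf_le)
    fix n
    have "(\<integral>\<^sup>+\<omega>. ennreal (v n * (a (g n) \<omega>)^2) \<partial>M) = (\<integral>\<^sup>+\<omega>. ennreal (v n) * ennreal ((a (g n) \<omega>)^2) \<partial>M)"
      by (simp add: ennreal_mult v0)
    also have "\<dots> = ennreal (v n) * (\<integral>\<^sup>+\<omega>. ennreal ((a (g n) \<omega>)^2) \<partial>M)"
      by (rule nn_integral_cmult) measurable
    also have "\<dots> \<le> ennreal (v n) * ennreal A2" by (intro mult_left_mono mom) auto
    finally show "(\<integral>\<^sup>+\<omega>. ennreal (v n * (a (g n) \<omega>)^2) \<partial>M) \<le> ennreal (v n) * ennreal A2" .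
  qed auto
  also have "(\<Sum>n. ennreal (v n) * ennreal A2) = ennreal V * ennreal A2"
  proof -
    have "(\<Sum>n. ennreal (v n)) = ennreal (\<Sum>n. v n)"
      by (rule suminf_ennreal2) (auto simp: v0 v_def intro: summable_mult geom_half(2))
    also have "(\<Sum>n. v n) = V" unfolding v_def V_def using geom_half by (simp add: suminf_mult)
    finally show ?thesis by simp
  qed
  finally have intH: "(\<integral>\<^sup>+\<omega>. H \<omega> \<partial>M) \<le> ennreal V * ennreal A2" .
  have "(\<integral>\<^sup>+\<omega>. ennreal ((kernelK a x y \<omega>)^2) \<partial>M) \<le> (\<integral>\<^sup>+\<omega>. ennreal V * H \<omega> \<partial>M)"
    by (intro nn_integral_mono pw)
  also have "\<dots> = ennreal V * (\<integral>\<^sup>+\<omega>. H \<omega> \<partial>M)" by (rule nn_integral_cmult[OF Hmeas])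
  also have "\<dots> \<le> ennreal V * (ennreal V * ennreal A2)" by (rule mult_left_mono[OF intH]) simp
  also have "\<dots> = ennreal (V * V * A2)" using V0 A20 by (simp add: ennreal_mult mult.assoc)
  finally have bnd: "(\<integral>\<^sup>+\<omega>. ennreal ((kernelK a x y \<omega>)^2) \<partial>M) \<le> ennreal (V * V * A2)" .
  have K2meas: "(\<lambda>\<omega>. (kernelK a x y \<omega>)^2) \<in> borel_measurable M" using Kmeas by measurable
  have int: "integrable M (\<lambda>\<omega>. (kernelK a x y \<omega>)^2)"
  proof (rule integrableI_bounded[OF K2meas])
    have "(\<integral>\<^sup>+\<omega>. ennreal (norm ((kernelK a x y \<omega>)^2)) \<partial>M) = (\<integral>\<^sup>+\<omega>. ennreal ((kernelK a x y \<omega>)^2) \<partial>M)"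
      by simp
    also have "\<dots> < \<infinity>" by (rule le_less_trans[OF bnd]) simp
    finally show "(\<integral>\<^sup>+\<omega>. ennreal (norm ((kernelK a x y \<omega>)^2)) \<partial>M) < \<infinity>" .
  qed
  have "integral\<^sup>L M (\<lambda>\<omega>. (kernelK a x y \<omega>)^2) = enn2real (\<integral>\<^sup>+\<omega>. ennreal ((kernelK a x y \<omega>)^2) \<partial>M)"
    by (rule integral_eq_nn_integral[OF K2meas]) simp
  also have "\<dots> \<le> V * V * A2" by (rule enn2real_leI[OF _ bnd]) (simp add: V0 A20)
  finally have "L2norm M (kernelK a x y) \<le> sqrt (V * V * A2)" unfolding L2norm_def by simp
  also have "\<dots> = V * sqrt A2" using V0 by (simp add: real_sqrt_mult)
  also have "\<dots> = 2 * sqrt A2 / dyadic_dist x y" unfolding dd V_def by (simp add: powr_minus divide_inverse)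
  finally show ?thesis using int by simp
qed


theorem theorem5p1:
  fixes M :: "'a measure" and a :: "int \<times> int \<Rightarrow> 'a \<Rightarrow> real" and \<nu> :: real
  assumes "prob_space M"
    and "prob_space.indep_vars M (\<lambda>_. borel) a UNIV"
    and "(\<lambda>I. integral\<^sup>L M (\<lambda>\<omega>. \<bar>a I \<omega>\<bar>)) summable_on UNIV"
    and "\<nu> > 0"
    and "\<And>I. subgaussian M \<nu> (a I)"
  shows "\<exists>B. \<forall>x y x' y'. 0 \<le> x \<and> 0 \<le> y \<and> 0 \<le> x' \<and> 0 \<le> y' \<and> x \<noteq> y \<longrightarrow>
     integrable M (\<lambda>\<omega>. (kernelK a x y \<omega>)\<^sup>2) \<and>
     L2norm M (kernelK a x y) \<le> B / dyadic_dist x y \<and>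
     (2 * dyadic_dist x' x \<le> dyadic_dist x y \<longrightarrow>
        L2norm M (\<lambda>\<omega>. kernelK a x' y \<omega> - kernelK a x y \<omega>)
          \<le> B * dyadic_dist x' x / (dyadic_dist x y)\<^sup>2) \<and>
     (2 * dyadic_dist y' y \<le> dyadic_dist x y \<longrightarrow>
        L2norm M (\<lambda>\<omega>. kernelK a x y' \<omega> - kernelK a x y \<omega>)
          \<le> B * dyadic_dist y' y / (dyadic_dist x y)\<^sup>2)"
proof -
  interpret prob_space M by fact
  have iX: "integrable M (a I)" for I using assms(5)[of I] unfolding subgaussian_def by blast
  have meas: "a I \<in> borel_measurable M" for I using iX by (rule borel_measurable_integrable)
  define S where "S = infsum (\<lambda>I. integral\<^sup>L M (\<lambda>\<omega>. \<bar>a I \<omega>\<bar>)) UNIV"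
  have mS: "\<bar>integral\<^sup>L M (a I)\<bar> \<le> S" for I
  proof -
    have "\<bar>integral\<^sup>L M (a I)\<bar> \<le> integral\<^sup>L M (\<lambda>\<omega>. \<bar>a I \<omega>\<bar>)"
      using integral_abs_bound[of M "a I"] by simp
    also have "\<dots> = infsum (\<lambda>I. integral\<^sup>L M (\<lambda>\<omega>. \<bar>a I \<omega>\<bar>)) {I}" by simp
    also have "\<dots> \<le> S" unfolding S_def
      by (rule infsum_mono_neutral) (auto intro: assms(3))
    finally show ?thesis .
  qed
  define A2 where "A2 = 16 * exp (\<nu>/2) + 2 * S^2"
  have A20: "0 \<le> A2" unfolding A2_def by (intro add_nonneg_nonneg) auto
  have mom: "(\<integral>\<^sup>+\<omega>. ennreal ((a I \<omega>)^2) \<partial>M) \<le> ennreal A2" for I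
  proof -
    have "(integral\<^sup>L M (a I))^2 \<le> S^2"
      using mS[of I] by (metis abs_le_square_iff abs_of_nonneg abs_ge_zero order_trans power2_abs)
    then have "16 * exp (\<nu>/2) + 2 * (integral\<^sup>L M (a I))^2 \<le> A2" unfolding A2_def by simp
    then show ?thesis using second_moment[OF assms(1) assms(5)[of I]] order_trans ennreal_leI by blast
  qed
  show ?thesis
  proof (intro exI allI impI conjI)
    fix x y x' y' :: real
    assume h: "0 \<le> x \<and> 0 \<le> y \<and> 0 \<le> x' \<and> 0 \<le> y' \<and> x \<noteq> y"
    then have hx: "0 \<le> x" "0 \<le> y" "0 \<le> x'" "0 \<le> y'" "x \<noteq> y" by auto
    have ka: "integrable M (\<lambda>\<omega>. (kernelK a x y \<omega>)^2) \<and> L2norm M (kernelK a x y) \<le> 2 * sqrt A2 / dyadic_dist x y"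
      by (rule kernel_a[OF assms(1) meas mom A20 hx(1,2,5)])
    then show "integrable M (\<lambda>\<omega>. (kernelK a x y \<omega>)\<^sup>2)" "L2norm M (kernelK a x y) \<le> 2 * sqrt A2 / dyadic_dist x y"
      by auto
    have B0: "0 \<le> 2 * sqrt A2" using A20 by simp
    have L0: "L2norm M (\<lambda>\<omega>. f \<omega> - f \<omega>) = 0" for f :: "'a \<Rightarrow> real" unfolding L2norm_def by simp
    {
      assume c: "2 * dyadic_dist x' x \<le> dyadic_dist x y"
      have "kernelK a x' y = kernelK a x y" by (rule kernel_eq[OF hx(1,2,3,5) c])
      then have "L2norm M (\<lambda>\<omega>. kernelK a x' y \<omega> - kernelK a x y \<omega>) = 0" using L0 by simp
      moreover have "0 \<le> 2 * sqrt A2 * dyadic_dist x' x / (dyadic_dist x y)\<^sup>2"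
        using B0 dd_nonneg[OF hx(3,1)] by simp
      ultimately show "L2norm M (\<lambda>\<omega>. kernelK a x' y \<omega> - kernelK a x y \<omega>) \<le> 2 * sqrt A2 * dyadic_dist x' x / (dyadic_dist x y)\<^sup>2"
        by simp
    }
    {
      assume c: "2 * dyadic_dist y' y \<le> dyadic_dist x y"
      then have c': "2 * dyadic_dist y' y \<le> dyadic_dist y x" using dd_sym[of x y] by simp
      have "kernelK a y' x = kernelK a y x" by (rule kernel_eq[OF hx(2,1,4) _ c']) (use hx(5) in auto)
      then have "kernelK a x y' = kernelK a x y" using kernel_sym[of a x y'] kernel_sym[of a x y] by simp
      then have "L2norm M (\<lambda>\<omega>. kernelK a x y' \<omega> - kernelK a x y \<omega>) = 0" using L0 by simp
      moreover have "0 \<le> 2 * sqrt A2 * dyadic_dist y' y / (dyadic_dist x y)\<^sup>2"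
        using B0 dd_nonneg[OF hx(4,2)] by simp
      ultimately show "L2norm M (\<lambda>\<omega>. kernelK a x y' \<omega> - kernelK a x y \<omega>) \<le> 2 * sqrt A2 * dyadic_dist y' y / (dyadic_dist x y)\<^sup>2"
        by simp
    }
  qed
qed

end
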